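(* Let $K\subset\mathbb{R}$ be a regular compact set, let $g$ be the Green function of $\overline{\mathbb{C}}\setminus K$ with pole at infinity, and for $\delta>0$ put $G(\delta):=\max\{ g(z): z\in\mathbb{C},\ \operatorname{dist}(z,K)\le 2\delta\}$. Let $0<\tau\le 1$ and let $x_0,\ldots,x_{n-1}\in K$ be a $\tau$-quasi Leja sequence. Then for every $\delta>0$, $$|x_i-x_j|\ge \tau\delta e^{-nG(\delta)}\quad\text{for all } i,j\in\{0,\ldots,n-1\},\ i\ne j.$$
   Context: A compact set $K\subset\mathbb{C}$ is regular if the Green function $g(z)=g_{\overline{\mathbb{C}}\setminus K}(z,\infty)$ of $\overline{\mathbb{C}}\setminus K$ with pole at infinity is continuous on $\mathbb{C}$ (with $g=0$ on $K$). For $0<\tau\le1$, a sequence $x_0,\ldots,x_{n-1}\in K$ is $\tau$-quasi Leja if for every $k=1,\ldots,n-1$, $\prod_{j<k}|x_k-x_j|\ge\tau\max_{x\in K}\prod_{j<k}|x-x_j|$. *)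

theory Defs
  imports "HOL-Complex_Analysis.Complex_Analysis"
begin

definition harmonic_on :: "(complex \<Rightarrow> real) \<Rightarrow> complex set \<Rightarrow> bool" where
  "harmonic_on u S \<longleftrightarrow> open S \<and>
     (\<forall>z\<in>S. \<exists>r>0. \<exists>f. f holomorphic_on ball z r \<and> ball z r \<subseteq> S \<and>
         (\<forall>w\<in>ball z r. u w = Re (f w)))"

text \<open>g is the (continuous) Green function of the complement of K with pole at infinity:
  continuous on C, zero on K, harmonic on C minus K, and g(z) - log|z| bounded near infinity.
  (By the maximum principle such a function is unique; it exists iff K is regular.)\<close>
definition green_function_cont :: "complex set \<Rightarrow> (complex \<Rightarrow> real) \<Rightarrow> bool" where
  "green_function_cont K g \<longleftrightarrow>
     continuous_on UNIV g \<and> (\<forall>z\<in>K. g z = 0) \<and> harmonic_on g (- K) \<and>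
     (\<exists>R C. \<forall>z. R \<le> cmod z \<longrightarrow> \<bar>g z - ln (cmod z)\<bar> \<le> C)"

definition regular_compact :: "complex set \<Rightarrow> bool" where
  "regular_compact K \<longleftrightarrow> compact K \<and> (\<exists>g. green_function_cont K g)"

definition quasi_leja :: "real \<Rightarrow> complex set \<Rightarrow> (nat \<Rightarrow> complex) \<Rightarrow> nat \<Rightarrow> bool" where
  "quasi_leja \<tau> K x n \<longleftrightarrow> (\<forall>i<n. x i \<in> K) \<and>
     (\<forall>k. 1 \<le> k \<and> k < n \<longrightarrow>
        (\<Prod>j<k. cmod (x k - x j)) \<ge> \<tau> * (SUP z\<in>K. \<Prod>j<k. cmod (z - x j)))"

end

theory Submission
  imports Defs
begin

lemma BW:
  fixes K :: "complex set" and g :: "complex \<Rightarrow> real" and a :: "nat \<Rightarrow> complex"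
  assumes gr: "green_function_cont K g" and Kne: "K \<noteq> {}"
    and jN: "j < N" and M: "\<And>z. z \<in> K \<Longrightarrow> cmod (\<Prod>l<j. (z - a l)) \<le> M"
  shows "cmod (\<Prod>l<j. (z - a l)) \<le> M * exp (real N * g z)"
proof (rule ccontr)
  define q where "q z = (\<Prod>l<j. (z - a l))" for z
  define w where "w z = cmod (q z) * exp (- (real N * g z))" for z
  have gc: "continuous_on UNIV g" and g0: "\<And>z. z \<in> K \<Longrightarrow> g z = 0"
    and harm: "harmonic_on g (- K)"
    and asy: "\<exists>R C. \<forall>z. R \<le> cmod z \<longrightarrow> \<bar>g z - ln (cmod z)\<bar> \<le> C"
    using gr unfolding green_function_cont_def by auto
  have wc: "continuous_on UNIV w"
    unfolding w_def q_def by (intro continuous_intros gc)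
  assume "\<not> ?thesis"
  then have z1: "w z > M"
    unfolding w_def q_def by (simp add: exp_minus field_simps)
  obtain R0 C where RC: "\<And>z. R0 \<le> cmod z \<Longrightarrow> \<bar>g z - ln (cmod z)\<bar> \<le> C"
    using asy by blast
  define B where "B = (\<Sum>l<j. cmod (a l))"
  define K0 where "K0 = 2 ^ j * exp (real N * C)"
  define R where "R = max (max R0 (max B 1)) (max (cmod z + 1) (K0 / w z + 1))"
  have M0: "M \<ge> 0" using Kne M by (meson ex_in_conv norm_ge_zero order_trans)
  have wpos: "w z > 0" using M0 z1 by linarith
  have far: "w y < w z" if "R \<le> cmod y" for y
  proof -
    have y1: "cmod y \<ge> 1" "cmod y \<ge> R0" "cmod y \<ge> B" "cmod y > K0 / w z"
      using that unfolding R_def by auto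
    have "cmod (q y) \<le> (2 * cmod y) ^ j"
    proof -
      have "cmod (q y) = (\<Prod>l<j. cmod (y - a l))" unfolding q_def by (simp add: prod_norm)
      also have "\<dots> \<le> (\<Prod>l<j. 2 * cmod y)"
      proof (rule prod_mono, safe)
        fix l assume "l < j"
        have "cmod (a l) \<le> B" unfolding B_def
          using \<open>l < j\<close> by (intro member_le_sum) auto
        then show "cmod (y - a l) \<le> 2 * cmod y" using y1 norm_triangle_ineq4[of y "a l"] by linarith
      qed auto
      finally show ?thesis by simp
    qed
    moreover have "exp (- (real N * g y)) \<le> exp (real N * C) / cmod y ^ N"
    proof -
      have "g y \<ge> ln (cmod y) - C" using RC[OF y1(2)] by linarith
      then have "- (real N * g y) \<le> real N * C - real N * ln (cmod y)"
        using mult_left_mono[of "ln (cmod y)" "C + g y" "real N"] by (simp add: algebra_simps)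
      then have "exp (- (real N * g y)) \<le> exp (real N * C - real N * ln (cmod y))" by simp
      also have "\<dots> = exp (real N * C) / exp (ln (cmod y)) ^ N"
        by (simp add: exp_diff exp_of_nat_mult)
      also have "\<dots> = exp (real N * C) / cmod y ^ N" using y1 by (subst exp_ln) auto
      finally show ?thesis .
    qed
    ultimately have "w y \<le> (2 * cmod y) ^ j * (exp (real N * C) / cmod y ^ N)"
      unfolding w_def by (intro mult_mono) auto
    also have "\<dots> = K0 / cmod y ^ (N - j)"
    proof -
      have "cmod y ^ N = cmod y ^ j * cmod y ^ (N - j)" using jN by (simp add: power_add[symmetric])
      then show ?thesis using y1 jN unfolding K0_def by (simp add: power_mult_distrib field_simps)
    qed
    also have "\<dots> \<le> K0 / cmod y"
    proof -
      have "cmod y ^ 1 \<le> cmod y ^ (N - j)" using y1 jN by (intro power_increasing) auto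
      then show ?thesis unfolding K0_def using y1 by (intro divide_left_mono) (auto intro!: mult_pos_pos)
    qed
    also have "\<dots> < w z" using y1 wpos by (subst pos_divide_less_eq) (auto simp: field_simps)
    finally show ?thesis .
  qed
  obtain z0 where z0: "z0 \<in> cball 0 R" "\<And>y. y \<in> cball 0 R \<Longrightarrow> w y \<le> w z0"
  proof -
    have "R \<ge> 0" unfolding R_def by linarith
    then have "cball (0::complex) R \<noteq> {}" by simp
    moreover have "continuous_on (cball 0 R) w" using wc by (rule continuous_on_subset) auto
    ultimately show ?thesis using continuous_attains_sup[of "cball 0 R" w] compact_cball that by blast
  qed
  have zin: "z \<in> cball 0 R" unfolding R_def by auto
  have glob: "w y \<le> w z0" for y
  proof (cases "y \<in> cball 0 R")
    case True then show ?thesis using z0 by auto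
  next
    case False then have "w y < w z" using far by auto
    then show ?thesis using z0(2)[OF zin] by linarith
  qed
  have big: "w z0 > M" using z0(2)[OF zin] z1 by linarith
  define S where "S = {y. w y = w z0}"
  have "closed S" unfolding S_def
    by (intro closed_Collect_eq wc continuous_on_const)
  moreover have "open S"
  proof (subst open_subopen, safe)
    fix y assume yS: "y \<in> S"
    have "y \<notin> K"
    proof
      assume "y \<in> K"
      then have "w y \<le> M" using M[of y] g0[of y] unfolding w_def q_def by simp
      then show False using yS big unfolding S_def by simp
    qed
    then obtain r f where r: "r > 0" "f holomorphic_on ball y r" "ball y r \<subseteq> - K"
      "\<And>u. u \<in> ball y r \<Longrightarrow> g u = Re (f u)"
    proof -
      have "\<forall>z\<in>-K. \<exists>r>0. \<exists>f. f holomorphic_on ball z r \<and> ball z r \<subseteq> -K \<and>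
         (\<forall>w\<in>ball z r. g w = Re (f w))" using harm unfolding harmonic_on_def by blast
      then show ?thesis using \<open>y \<notin> K\<close> that by blast
    qed
    define h where "h u = q u * exp (- (of_nat N * f u))" for u
    have hw: "cmod (h u) = w u" if "u \<in> ball y r" for u
      unfolding h_def w_def using r(4)[OF that] by (simp add: norm_mult norm_exp_eq_Re)
    have "h holomorphic_on ball y r"
      unfolding h_def q_def by (intro holomorphic_intros r(2))
    then have "h constant_on ball y r"
      by (rule maximum_modulus_principle[where U="ball y r" and \<xi> = y])
        (use r yS glob hw in \<open>auto simp: S_def\<close>)
    then obtain c where c: "\<And>u. u \<in> ball y r \<Longrightarrow> h u = c" unfolding constant_on_def by blast
    have yb: "y \<in> ball y r" using r(1) by simp
    have "w u = w y" if "u \<in> ball y r" for u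
      using hw[OF that] hw[OF yb] c[OF that] c[OF yb] by simp
    then have "ball y r \<subseteq> S" using yS unfolding S_def by auto
    then show "\<exists>T. open T \<and> y \<in> T \<and> T \<subseteq> S" using r(1) by (meson centre_in_ball open_ball)
  qed
  ultimately have "S = {} \<or> S = UNIV" using clopen by blast
  moreover have "z0 \<in> S" unfolding S_def by simp
  ultimately have "S = UNIV" by blast
  obtain k where k: "k \<in> K" using Kne by blast
  have "w k \<le> M" using M[OF k] g0[OF k] unfolding w_def q_def by simp
  moreover have "k \<in> S" using \<open>S = UNIV\<close> by simp
  ultimately show False using big unfolding S_def by simp
qed

lemma main_ij:
  fixes K :: "complex set" and g :: "complex \<Rightarrow> real" and \<tau> :: real
    and x :: "nat \<Rightarrow> complex" and n :: nat and G :: "real \<Rightarrow> real"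
  assumes Kc: "compact K" and gr: "green_function_cont K g"
    and Gd: "G \<delta> = (SUP z\<in>{z. infdist z K \<le> 2 * \<delta>}. g z)"
    and tau: "0 < \<tau>" "\<tau> \<le> 1" and ql: "quasi_leja \<tau> K x n"
    and ij: "i < j" "j < n" and d: "\<delta> > 0"
  shows "cmod (x j - x i) \<ge> \<tau> * \<delta> * exp (- (real n * G \<delta>))"
proof -
  have xK: "\<And>l. l < n \<Longrightarrow> x l \<in> K" using ql unfolding quasi_leja_def by auto
  have Kne: "K \<noteq> {}" using xK[of 0] ij by auto
  define T where "T = {z. infdist z K \<le> 2*\<delta>}"
  have gc: "continuous_on UNIV g" and g0: "\<And>z. z\<in>K \<Longrightarrow> g z = 0"
    using gr unfolding green_function_cont_def by auto
  have "compact T"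
  proof -
    have "closed T" unfolding T_def by (intro closed_Collect_le continuous_intros)
    moreover have "bounded T"
    proof -
      obtain B where B: "\<forall>k\<in>K. norm k \<le> B" using compact_imp_bounded[OF Kc] bounded_iff by auto
      have "T \<subseteq> cball 0 (B + 2*\<delta>)"
      proof
        fix z assume zT: "z \<in> T"
        obtain k where k: "k\<in>K" "infdist z K = dist z k"
          using infdist_attains_inf[OF compact_imp_closed[OF Kc] Kne] by blast
        have "norm z \<le> norm k + dist z k" using norm_triangle_ineq2[of z k] by (simp add: dist_norm)
        then show "z \<in> cball 0 (B+2*\<delta>)" using B k zT unfolding T_def by auto
      qed
      then show ?thesis using bounded_cball bounded_subset by blast
    qed
    ultimately show ?thesis using compact_eq_bounded_closed by blast
  qed
  then have "compact (g ` T)"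
    using compact_continuous_image[OF continuous_on_subset[OF gc subset_UNIV]] by blast
  then have "bdd_above (g ` T)" by (intro bounded_imp_bdd_above compact_imp_bounded)
  then have gG: "g z \<le> G \<delta>" if "infdist z K \<le> 2*\<delta>" for z
    unfolding Gd using that unfolding T_def by (intro cSUP_upper) auto
  have G0: "G \<delta> \<ge> 0" using gG[of "x 0"] g0 xK ij d by simp
  show ?thesis
  proof (cases "cmod (x j - x i) \<ge> \<delta>")
    case True
    have "\<tau> * \<delta> * exp (-(real n * G \<delta>)) \<le> 1 * \<delta> * 1"
      by (intro mult_mono) (use tau d G0 in auto)
    then show ?thesis using True by simp
  next
    case False
    define q where "q z = (\<Prod>l<j. (z - x l))" for z
    define Ms where "Ms = (SUP z\<in>K. \<Prod>l<j. cmod (z - x l))"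
    have qn: "cmod (q z) = (\<Prod>l<j. cmod (z - x l))" for z unfolding q_def by (simp add: prod_norm)
    have "bdd_above ((\<lambda>z. \<Prod>l<j. cmod (z - x l)) ` K)"
      by (intro bounded_imp_bdd_above compact_imp_bounded compact_continuous_image Kc continuous_intros)
    then have qM: "cmod (q z) \<le> Ms" if "z\<in>K" for z unfolding Ms_def qn using that by (intro cSUP_upper)
    have BWq: "cmod (q z) \<le> Ms * exp (real n * g z)" for z
      using BW[OF gr Kne ij(2), of x Ms z] qM unfolding q_def by blast
    have lej: "\<tau> * Ms \<le> cmod (q (x j))"
      using ql ij unfolding quasi_leja_def Ms_def qn by auto
    have Mpos: "Ms > 0"
    proof (rule ccontr)
      assume nM: "\<not> Ms > 0"
      obtain z where z: "z \<notin> x ` {..<j}"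
        using ex_new_if_finite[OF infinite_UNIV_char_0[where 'a=complex], of "x ` {..<j}"] by auto
      then have "q z \<noteq> 0" unfolding q_def by auto
      moreover have "cmod (q z) \<le> 0" using BWq[of z] nM
        by (meson mult_nonpos_nonneg exp_ge_zero not_less order_trans)
      ultimately show False by simp
    qed
    define h where "h z = (\<Prod>l\<in>{..<j}-{i}. (z - x l))" for z
    have qh: "q z = (z - x i) * h z" for z
      unfolding q_def h_def using ij by (subst prod.remove[of _ i]) auto
    have hb: "cmod (h (x j)) \<le> Ms * exp (real n * G \<delta>) / \<delta>"
    proof -
      have "h holomorphic_on interior (cball (x j) (2*\<delta>))" unfolding h_def by (intro holomorphic_intros)
      moreover have "continuous_on (closure (cball (x j) (2 * \<delta>))) h" unfolding h_def by (intro continuous_intros)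
      moreover have "bounded (cball (x j) (2*\<delta>))" by simp
      moreover have xjin: "x j \<in> cball (x j) (2*\<delta>)" using d by simp
      moreover have "cmod (h z) \<le> Ms * exp (real n * G \<delta>) / \<delta>" if "z \<in> frontier (cball (x j) (2*\<delta>))" for z
      proof -
        note zf = that
      from zf have zs: "dist (x j) z = 2*\<delta>" using d by (simp add: frontier_cball)
      have "infdist z K \<le> 2*\<delta>" using infdist_le[OF xK[OF ij(2)], of z] zs by (simp add: dist_commute)
      then have gz: "g z \<le> G \<delta>" by (rule gG)
      have dz: "cmod (z - x i) \<ge> \<delta>"
      proof -
        have "dist (x j) z \<le> dist (x j) (x i) + dist z (x i)" by (metis dist_commute dist_triangle)
        then show ?thesis using zs False by (simp add: dist_norm)
      qed
      have "cmod (z - x i) * cmod (h z) = cmod (q z)" using qh[of z] by (simp add: norm_mult)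
      also have "\<dots> \<le> Ms * exp (real n * g z)" by (rule BWq)
      also have "\<dots> \<le> Ms * exp (real n * G \<delta>)" using Mpos gz by (intro mult_left_mono) (auto intro: mult_left_mono)
      finally have "cmod (z - x i) * cmod (h z) \<le> Ms * exp (real n * G \<delta>)" .
      moreover have "\<delta> * cmod (h z) \<le> cmod (z - x i) * cmod (h z)" using dz by (intro mult_right_mono) auto
      ultimately show "cmod (h z) \<le> Ms * exp (real n * G \<delta>) / \<delta>" using d
        by (simp add: field_simps)
      qed
      ultimately show ?thesis using maximum_modulus_frontier[where \<xi>="x j"] by blast
    qed
    have "\<tau> * Ms \<le> cmod (x j - x i) * cmod (h (x j))" using lej qh[of "x j"] by (simp add: norm_mult)
    also have "\<dots> \<le> cmod (x j - x i) * (Ms * exp (real n * G \<delta>) / \<delta>)"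
      using hb by (intro mult_left_mono) auto
    finally have "\<tau> * Ms * \<delta> \<le> Ms * (cmod (x j - x i) * exp (real n * G \<delta>))"
      using d by (simp add: field_simps)
    then have "\<tau> * \<delta> \<le> cmod (x j - x i) * exp (real n * G \<delta>)"
      using Mpos by (simp add: mult.assoc mult.left_commute[of Ms])
    then have "\<tau> * \<delta> * exp (- (real n * G \<delta>)) \<le> cmod (x j - x i) * exp (real n * G \<delta>) * exp (- (real n * G \<delta>))"
      by (intro mult_right_mono) auto
    then show ?thesis by (simp add: mult.assoc exp_minus_inverse)
  qed
qed


theorem lemma1:
  fixes K :: "complex set" and g :: "complex \<Rightarrow> real" and \<tau> :: real
    and x :: "nat \<Rightarrow> complex" and n :: nat and G :: "real \<Rightarrow> real"
  assumes "K \<subseteq> \<real>" and "regular_compact K" and "green_function_cont K g"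
    and "\<And>\<delta>. G \<delta> = (SUP z\<in>{z. infdist z K \<le> 2 * \<delta>}. g z)"
    and "0 < \<tau>" and "\<tau> \<le> 1" and "quasi_leja \<tau> K x n"
  shows "\<forall>\<delta>>0. \<forall>i<n. \<forall>j<n. i \<noteq> j \<longrightarrow>
           cmod (x i - x j) \<ge> \<tau> * \<delta> * exp (- (real n * G \<delta>))"
proof (intro allI impI)
  fix \<delta> :: real and i j :: nat
  assume d: "\<delta> > 0" and i: "i < n" and j: "j < n" and ij: "i \<noteq> j"
  have Kc: "compact K" using assms(2) unfolding regular_compact_def by auto
  show "cmod (x i - x j) \<ge> \<tau> * \<delta> * exp (- (real n * G \<delta>))"
  proof (cases "i < j")
    case True
    from main_ij[where G=G and \<delta>=\<delta>, OF Kc assms(3) assms(4)[of \<delta>] assms(5,6,7) True j d]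
    show ?thesis by (simp add: norm_minus_commute)
  next
    case False
    then have "j < i" using ij by simp
    from main_ij[where G=G and \<delta>=\<delta>, OF Kc assms(3) assms(4)[of \<delta>] assms(5,6,7) this i d] show ?thesis .
  qed
qed

end
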